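(* Let $V_s, V_{sr} : [0,\infty) \to \mathbb{R}^6$ be continuously differentiable (the actual and required spatial velocities of the surrogate end-effector), let $M_e, D_e, K_e \in \mathbb{R}^{6\times 6}$ be the environmental mass, damping and stiffness matrices with $M_e$ symmetric positive semidefinite, and let $\mathbf{x}_e : [0,\infty)\to\mathbb{R}^6$ be the environment deformation. Define the contact force and the required contact force $$f_e = M_e \dot V_s + D_e V_s + K_e \mathbf{x}_e, \qquad f_{ed} = M_e \dot V_{sr} + D_e V_s + K_e \mathbf{x}_e,$$ and let ${}^T F = N_c f_e$, ${}^T F_r = N_c f_{ed}$ for a matrix $N_c\in\mathbb{R}^{6\times 6}$, where the contact-frame velocities ${}^T V, {}^T V_r \in \mathbb{R}^6$ satisfy $N_c^T({}^T V_r - {}^T V) = V_{sr} - V_s$. Let the virtual power flow at the contact frame be $$p_T = ({}^T V_r - {}^T V)^T({}^T F_r - {}^T F).$$ Then there exists a positive constant $\varrho_{0s}$ such that $$\liminf_{t\to\infty} \int_0^t p_T \, d\tau \;\ge\; -\varrho_{0s}.$$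
   Context: This concerns a force-reflected teleoperation setting in which a surrogate robot's end-effector (frame $\{T\}$) contacts an unknown environment modeled as a mass–damper–spring system. The virtual power flow (VPF) at a frame $\{A\}$ is defined as the inner product of the spatial velocity error and the spatial force error, $p_A = ({}^A V_r - {}^A V)^T({}^A F_r - {}^A F)$, where the subscript $r$ denotes "required" quantities generated by the controller. *)

theory Defs
  imports "HOL-Analysis.Analysis"
begin

definition msd_force ::
  "real^6^6 \<Rightarrow> real^6^6 \<Rightarrow> real^6^6 \<Rightarrow> real^6 \<Rightarrow> real^6 \<Rightarrow> real^6 \<Rightarrow> real^6" where
  "msd_force M D K acc vel defo = M *v acc + D *v vel + K *v defo"

definition vpf :: "real^6 \<Rightarrow> real^6 \<Rightarrow> real^6 \<Rightarrow> real^6 \<Rightarrow> real" where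
  "vpf Vr V Fr F = (Vr - V) \<bullet> (Fr - F)"

end

theory Submission
  imports Defs
begin

lemma vpf_eq:
  fixes Me Nc :: "real^6^6" and a b u v :: "real^6"
  shows "vpf a b (Nc *v msd_force Me De Ke u x y) (Nc *v msd_force Me De Ke w x y)
        = (transpose Nc *v (a - b)) \<bullet> (Me *v (u - w))"
proof -
  have "Nc *v msd_force Me De Ke u x y - Nc *v msd_force Me De Ke w x y = Nc *v (Me *v (u - w))"
    unfolding msd_force_def
    by (simp add: matrix_vector_mult_diff_distrib[symmetric] matrix_vector_right_distrib)
  then show ?thesis unfolding vpf_def
    by (simp add: dot_lmul_matrix)
qed

lemma sym_inner:
  fixes Me :: "real^6^6"
  assumes "transpose Me = Me"
  shows "x \<bullet> (Me *v y) = y \<bullet> (Me *v x)"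
proof -
  have "x \<bullet> (Me *v y) = (transpose Me *v x) \<bullet> y" by (simp add: dot_lmul_matrix)
  also have "\<dots> = y \<bullet> (Me *v x)" using assms by (simp add: inner_commute)
  finally show ?thesis .
qed

theorem lemma4:
  fixes Vs Vsr Vs' Vsr' xe TV TVr :: "real \<Rightarrow> real^6"
    and Me De Ke Nc :: "real^6^6"
  assumes Vs_deriv: "\<forall>t\<ge>0. (Vs has_vector_derivative Vs' t) (at t within {0..})"
    and Vs_cont: "continuous_on {0..} Vs'"
    and Vsr_deriv: "\<forall>t\<ge>0. (Vsr has_vector_derivative Vsr' t) (at t within {0..})"
    and Vsr_cont: "continuous_on {0..} Vsr'"
    and Me_sym: "transpose Me = Me"
    and Me_psd: "\<forall>x. 0 \<le> x \<bullet> (Me *v x)"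
    and contact_vel: "\<forall>t\<ge>0. transpose Nc *v (TVr t - TV t) = Vsr t - Vs t"
  shows "\<exists>\<rho>>0. Liminf at_top
           (\<lambda>t. ereal (integral {0..t}
              (\<lambda>\<tau>. vpf (TVr \<tau>) (TV \<tau>)
                      (Nc *v msd_force Me De Ke (Vsr' \<tau>) (Vs \<tau>) (xe \<tau>))
                      (Nc *v msd_force Me De Ke (Vs' \<tau>) (Vs \<tau>) (xe \<tau>)))))
         \<ge> ereal (- \<rho>)"
proof -
  define e where "e = (\<lambda>\<tau>. Vsr \<tau> - Vs \<tau>)"
  define e' where "e' = (\<lambda>\<tau>. Vsr' \<tau> - Vs' \<tau>)"
  define g where "g = (\<lambda>\<tau>. (e \<tau> \<bullet> (Me *v e \<tau>)) / 2)"
  define c where "c = g 0 + 1"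
  have ed: "(e has_vector_derivative e' t) (at t within {0..})" if "t \<ge> 0" for t
    unfolding e_def e'_def using Vs_deriv Vsr_deriv that
    by (auto intro!: derivative_intros)
  have gd: "(g has_vector_derivative (e t \<bullet> (Me *v e' t))) (at t within {0..})" if "t \<ge> 0" for t
  proof -
    have bl: "bounded_linear (\<lambda>x. Me *v (x::real^6))" by (simp add: matrix_vector_mul_bounded_linear)
    have d1: "(e has_derivative (\<lambda>h. h *\<^sub>R e' t)) (at t within {0..})"
      using ed[OF that] by (simp add: has_vector_derivative_def)
    have d2: "((\<lambda>\<tau>. Me *v e \<tau>) has_derivative (\<lambda>h. Me *v (h *\<^sub>R e' t))) (at t within {0..})"
      using bounded_linear.has_derivative[OF bl d1] .
    have d3: "((\<lambda>\<tau>. e \<tau> \<bullet> (Me *v e \<tau>)) has_derivative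
       (\<lambda>h. e t \<bullet> (Me *v (h *\<^sub>R e' t)) + (h *\<^sub>R e' t) \<bullet> (Me *v e t))) (at t within {0..})"
      using has_derivative_inner[OF d1 d2] .
    have eq: "(\<lambda>h. (e t \<bullet> (Me *v (h *\<^sub>R e' t)) + (h *\<^sub>R e' t) \<bullet> (Me *v e t)) / 2)
        = (\<lambda>h. h *\<^sub>R (e t \<bullet> (Me *v e' t)))"
      using sym_inner[OF Me_sym, of "e' t" "e t"]
      by (auto simp: matrix_vector_mult_scaleR algebra_simps)
    have "(g has_derivative (\<lambda>h. (e t \<bullet> (Me *v (h *\<^sub>R e' t)) + (h *\<^sub>R e' t) \<bullet> (Me *v e t)) / 2)) (at t within {0..})"
      unfolding g_def by (rule bounded_linear.has_derivative[OF bounded_linear_divide d3])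
    then show ?thesis unfolding eq has_vector_derivative_def .
  qed
  have bound: "integral {0..t}
              (\<lambda>\<tau>. vpf (TVr \<tau>) (TV \<tau>)
                      (Nc *v msd_force Me De Ke (Vsr' \<tau>) (Vs \<tau>) (xe \<tau>))
                      (Nc *v msd_force Me De Ke (Vs' \<tau>) (Vs \<tau>) (xe \<tau>))) \<ge> - c" if "t \<ge> 0" for t
  proof -
    have "((\<lambda>\<tau>. e \<tau> \<bullet> (Me *v e' \<tau>)) has_integral g t - g 0) {0..t}"
      by (rule fundamental_theorem_of_calculus[OF that])
         (auto intro: has_vector_derivative_within_subset[OF gd])
    then have "integral {0..t} (\<lambda>\<tau>. e \<tau> \<bullet> (Me *v e' \<tau>)) = g t - g 0"
      by (rule integral_unique)
    moreover have "integral {0..t}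
              (\<lambda>\<tau>. vpf (TVr \<tau>) (TV \<tau>)
                      (Nc *v msd_force Me De Ke (Vsr' \<tau>) (Vs \<tau>) (xe \<tau>))
                      (Nc *v msd_force Me De Ke (Vs' \<tau>) (Vs \<tau>) (xe \<tau>)))
           = integral {0..t} (\<lambda>\<tau>. e \<tau> \<bullet> (Me *v e' \<tau>))"
      by (rule integral_cong) (use contact_vel in \<open>auto simp: vpf_eq e_def e'_def\<close>)
    moreover have "g t \<ge> 0" unfolding g_def using Me_psd by simp
    ultimately show ?thesis unfolding c_def by simp
  qed
  have c0: "c > 0" unfolding c_def g_def using Me_psd[rule_format, of "e 0"] by simp
  show ?thesis
  proof (rule exI[of _ c], intro conjI Liminf_bounded)
    show "0 < c" by (rule c0)
  next
    show "\<forall>\<^sub>F t in at_top. ereal (- c) \<le> ereal (integral {0..t}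
              (\<lambda>\<tau>. vpf (TVr \<tau>) (TV \<tau>)
                      (Nc *v msd_force Me De Ke (Vsr' \<tau>) (Vs \<tau>) (xe \<tau>))
                      (Nc *v msd_force Me De Ke (Vs' \<tau>) (Vs \<tau>) (xe \<tau>))))"
      using eventually_ge_at_top[of "0::real"] by eventually_elim (use bound in auto)
  qed
qed

end
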